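(* For every $n$-point metric $M=(V,\delta)$ and every range assignment $r:V\to\mathbb{R}^+$, $w(MSF(SDG(M,r))) \le 2\log_{5/4} n\cdot w(MST(M))$; in particular $w(MSF(SDG(M,r))) = O(\log n)\cdot w(MST(M))$. Consequently, every connected symmetric disk graph of $M$ has a minimum spanning tree of weight $O(\log n)\cdot w(MST(M))$.
   Context: A metric $M=(V,\delta)$ is viewed as the complete weighted graph on $V$ with edge weights $\delta(u,v)$; $MST(M)$ is its minimum spanning tree. A range assignment is a map $r:V\to\mathbb{R}^+$. The symmetric disk graph $SDG(M,r)$ is the undirected spanning subgraph containing the edge $(u,v)$ (with weight $\delta(u,v)$) if and only if $r(u)\ge\delta(u,v)$ and $r(v)\ge\delta(u,v)$. $MSF(\cdot)$ denotes a minimum spanning forest (a spanning forest with the same connected components and minimum total weight). The weight $w(\cdot)$ of a graph is the sum of its edge weights. *)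

theory Defs
  imports Complex_Main
begin

definition metric_on :: "'a set \<Rightarrow> ('a \<Rightarrow> 'a \<Rightarrow> real) \<Rightarrow> bool" where
  "metric_on V d \<longleftrightarrow>
     (\<forall>x\<in>V. \<forall>y\<in>V. d x y \<ge> 0 \<and> (d x y = 0 \<longleftrightarrow> x = y) \<and> d x y = d y x) \<and>
     (\<forall>x\<in>V. \<forall>y\<in>V. \<forall>z\<in>V. d x z \<le> d x y + d y z)"

definition complete_edges :: "'a set \<Rightarrow> 'a set set" where
  "complete_edges V = {{u, v} | u v. u \<in> V \<and> v \<in> V \<and> u \<noteq> v}"

text \<open>Weight of an edge {u,v} is d u v (well defined for symmetric d).\<close>
definition edge_weight :: "('a \<Rightarrow> 'a \<Rightarrow> real) \<Rightarrow> 'a set \<Rightarrow> real" where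
  "edge_weight d e = (THE x. \<exists>u v. e = {u, v} \<and> x = d u v)"

definition graph_weight :: "('a \<Rightarrow> 'a \<Rightarrow> real) \<Rightarrow> 'a set set \<Rightarrow> real" where
  "graph_weight d F = (\<Sum>e\<in>F. edge_weight d e)"

definition adj :: "'a set set \<Rightarrow> 'a \<Rightarrow> 'a \<Rightarrow> bool" where
  "adj F u v \<longleftrightarrow> {u, v} \<in> F \<and> u \<noteq> v"

definition reach :: "'a set set \<Rightarrow> 'a \<Rightarrow> 'a \<Rightarrow> bool" where
  "reach F = (adj F)\<^sup>*\<^sup>*"

text \<open>A forest: an acyclic graph, i.e. no edge lies on a cycle
  (removing any edge disconnects its endpoints).\<close>
definition forest :: "'a set set \<Rightarrow> bool" where
  "forest F \<longleftrightarrow> (\<forall>e\<in>F. \<forall>u v. e = {u, v} \<longrightarrow> \<not> reach (F - {e}) u v)"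

definition spanning_forest :: "'a set \<Rightarrow> 'a set set \<Rightarrow> 'a set set \<Rightarrow> bool" where
  "spanning_forest V E F \<longleftrightarrow> F \<subseteq> E \<and> forest F \<and>
     (\<forall>u\<in>V. \<forall>v\<in>V. reach F u v \<longleftrightarrow> reach E u v)"

definition is_MSF :: "'a set \<Rightarrow> ('a \<Rightarrow> 'a \<Rightarrow> real) \<Rightarrow> 'a set set \<Rightarrow> 'a set set \<Rightarrow> bool" where
  "is_MSF V d E F \<longleftrightarrow> spanning_forest V E F \<and>
     (\<forall>F'. spanning_forest V E F' \<longrightarrow> graph_weight d F \<le> graph_weight d F')"

definition is_MST :: "'a set \<Rightarrow> ('a \<Rightarrow> 'a \<Rightarrow> real) \<Rightarrow> 'a set set \<Rightarrow> bool" where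
  "is_MST V d T \<longleftrightarrow> is_MSF V d (complete_edges V) T"

definition SDG :: "'a set \<Rightarrow> ('a \<Rightarrow> 'a \<Rightarrow> real) \<Rightarrow> ('a \<Rightarrow> real) \<Rightarrow> 'a set set" where
  "SDG V d r = {{u, v} | u v. u \<in> V \<and> v \<in> V \<and> u \<noteq> v \<and> d u v \<le> r u \<and> d u v \<le> r v}"

end

theory Submission
  imports Defs
begin

lemma adj_sym: "adj K x y \<Longrightarrow> adj K y x"
  unfolding adj_def by (auto simp: insert_commute)

lemma reach_sym: "reach K x y \<Longrightarrow> reach K y x"
  unfolding reach_def
proof (induction rule: rtranclp_induct)
  case base then show ?case by simp
next
  case (step y z)
  then show ?case by (meson adj_sym converse_rtranclp_into_rtranclp)
qed

lemma reach_trans: "reach K x y \<Longrightarrow> reach K y z \<Longrightarrow> reach K x z"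
  unfolding reach_def by (rule rtranclp_trans)

lemma reach_refl: "reach K x x" unfolding reach_def by simp

lemma reach_edge: "{x,y} \<in> K \<Longrightarrow> reach K x y"
  unfolding reach_def
  by (cases "x = y") (auto simp: adj_def intro: r_into_rtranclp)

lemma reach_sub:
  assumes "\<And>a b. {a,b} \<in> K \<Longrightarrow> a \<noteq> b \<Longrightarrow> reach K' a b"
  shows "reach K x y \<Longrightarrow> reach K' x y"
  unfolding reach_def[of K]
proof (induction rule: rtranclp_induct)
  case base then show ?case by (rule reach_refl)
next
  case (step y z)
  then have "{y,z} \<in> K" "y \<noteq> z" unfolding adj_def by auto
  then have "reach K' y z" by (rule assms)
  then show ?case using step.IH reach_trans by metis
qed

lemma reach_mono: "K \<subseteq> K' \<Longrightarrow> reach K x y \<Longrightarrow> reach K' x y"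
  by (rule reach_sub) (auto intro: reach_edge)

lemma reach_insert_cases:
  assumes "reach (insert {u,v} K) x y"
  shows "reach K x y \<or> (reach K x u \<and> reach K v y) \<or> (reach K x v \<and> reach K u y)"
  using assms unfolding reach_def[of "insert {u,v} K"]
proof (induction rule: rtranclp_induct)
  case base then show ?case by (intro disjI1 reach_refl)
next
  case (step y z)
  from step.hyps(2) have "{y,z} = {u,v} \<or> {y,z} \<in> K" unfolding adj_def by auto
  then show ?case
  proof
    assume "{y,z} = {u,v}"
    hence "(y = u \<and> z = v) \<or> (y = v \<and> z = u)" by (auto simp: doubleton_eq_iff)
    then show ?thesis using step.IH by (auto simp: reach_refl)
  next
    assume "{y,z} \<in> K"
    hence yz: "reach K y z" by (rule reach_edge)
    have t: "\<And>w. reach K w y \<Longrightarrow> reach K w z" using yz reach_trans by metis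
    show ?thesis using step.IH t by blast
  qed
qed

lemma reach_insert_iff:
  "reach (insert {u,v} K) x y \<longleftrightarrow>
    reach K x y \<or> (reach K x u \<and> reach K v y) \<or> (reach K x v \<and> reach K u y)"
proof
  assume "reach (insert {u,v} K) x y" then show "reach K x y \<or> (reach K x u \<and> reach K v y) \<or> (reach K x v \<and> reach K u y)"
    by (rule reach_insert_cases)
next
  have m: "\<And>a b. reach K a b \<Longrightarrow> reach (insert {u,v} K) a b" by (rule reach_mono) auto
  have e1: "reach (insert {u,v} K) u v" by (rule reach_edge) simp
  have e2: "reach (insert {u,v} K) v u" using e1 reach_sym by metis
  assume "reach K x y \<or> (reach K x u \<and> reach K v y) \<or> (reach K x v \<and> reach K u y)"
  then show "reach (insert {u,v} K) x y" using m e1 e2 reach_trans by metis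
qed

lemma edge_weight_eq:
  assumes "g a b = g b a"
  shows "edge_weight g {a,b} = g a b"
  unfolding edge_weight_def
proof (rule the_equality)
  show "\<exists>u v. {a,b} = {u,v} \<and> g a b = g u v" by blast
next
  fix x assume "\<exists>u v. {a, b} = {u, v} \<and> x = g u v"
  then obtain u v where "{a,b} = {u,v}" "x = g u v" by blast
  then show "x = g a b" using assms by (auto simp: doubleton_eq_iff)
qed

lemma cover_sum:
  fixes lo hi :: "'e \<Rightarrow> real"
  assumes "finite E" "\<And>e. e \<in> E \<Longrightarrow> lo e \<le> hi e"
    and "\<And>t. c \<le> t \<Longrightarrow> t < dd \<Longrightarrow> \<exists>e\<in>E. lo e \<le> t \<and> t < hi e"
  shows "dd - c \<le> (\<Sum>e\<in>E. hi e - lo e)"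
  using assms
proof (induction "card E" arbitrary: E c rule: less_induct)
  case less
  have nn0: "0 \<le> (\<Sum>e\<in>E. hi e - lo e)" by (intro sum_nonneg) (simp add: less.prems(2))
  show ?case
  proof (cases "c < dd")
    case False
    then show ?thesis using nn0 by linarith
  next
    case True
    then obtain e where e: "e \<in> E" "lo e \<le> c" "c < hi e" using less.prems(3) by blast
    have split: "(\<Sum>e\<in>E. hi e - lo e) = (hi e - lo e) + (\<Sum>e\<in>E-{e}. hi e - lo e)"
      using less.prems(1) e(1) by (simp add: sum.remove)
    have nn: "0 \<le> (\<Sum>e\<in>E-{e}. hi e - lo e)" by (intro sum_nonneg) (simp add: less.prems(2))
    show ?thesis
    proof (cases "dd \<le> hi e")
      case True then show ?thesis using split nn e by linarith
    next
      case False
      have "dd - hi e \<le> (\<Sum>e\<in>E-{e}. hi e - lo e)"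
      proof (rule less.hyps)
        show "card (E - {e}) < card E" using less.prems(1) e(1) by (rule card_Diff1_less)
        show "finite (E - {e})" using less.prems(1) by simp
        show "\<And>e'. e' \<in> E - {e} \<Longrightarrow> lo e' \<le> hi e'" using less.prems(2) by simp
        fix t assume t: "hi e \<le> t" "t < dd"
        then obtain e' where "e' \<in> E" "lo e' \<le> t" "t < hi e'" using less.prems(3)[of t] e by force
        then show "\<exists>e'\<in>E - {e}. lo e' \<le> t \<and> t < hi e'" using t by (intro bexI[of _ e']) auto
      qed
      then show ?thesis using split e by linarith
    qed
  qed
qed

lemma reach_cover:
  fixes g :: "'a \<Rightarrow> real"
  assumes "reach K a b"
  shows "min (g a) (g b) \<le> t \<Longrightarrow> t < max (g a) (g b) \<Longrightarrow>
      \<exists>p q. {p,q} \<in> K \<and> min (g p) (g q) \<le> t \<and> t < max (g p) (g q)"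
  using assms unfolding reach_def
proof (induction arbitrary: t rule: rtranclp_induct)
  case base then show ?case by simp
next
  case (step y z)
  have yz: "{y,z} \<in> K" using step.hyps(2) unfolding adj_def by simp
  show ?case
  proof (cases "min (g a) (g y) \<le> t \<and> t < max (g a) (g y)")
    case True then show ?thesis using step.IH by blast
  next
    case False
    then have "min (g y) (g z) \<le> t \<and> t < max (g y) (g z)" using step.prems by linarith
    then show ?thesis using yz by blast
  qed
qed

lemma variation:
  fixes g :: "'a \<Rightarrow> real"
  assumes "finite K" "\<forall>e\<in>K. \<exists>p q. e = {p,q}" "reach K a b"
  shows "\<bar>g a - g b\<bar> \<le> (\<Sum>e\<in>K. edge_weight (\<lambda>p q. \<bar>g p - g q\<bar>) e)"
proof -
  define lo where "lo = edge_weight (\<lambda>p q. min (g p) (g q))"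
  define hi where "hi = edge_weight (\<lambda>p q. max (g p) (g q))"
  have eqs: "lo {p,q} = min (g p) (g q)" "hi {p,q} = max (g p) (g q)"
    "edge_weight (\<lambda>p q. \<bar>g p - g q\<bar>) {p,q} = \<bar>g p - g q\<bar>" for p q
    unfolding lo_def hi_def by (rule edge_weight_eq; simp add: abs_minus_commute)+
  have "max (g a) (g b) - min (g a) (g b) \<le> (\<Sum>e\<in>K. hi e - lo e)"
  proof (rule cover_sum)
    show "finite K" by fact
    show "lo e \<le> hi e" if "e \<in> K" for e using assms(2) that eqs by force
    fix t assume "min (g a) (g b) \<le> t" "t < max (g a) (g b)"
    then obtain p q where "{p,q} \<in> K" "min (g p) (g q) \<le> t" "t < max (g p) (g q)"
      using reach_cover[OF assms(3)] by blast
    then show "\<exists>e\<in>K. lo e \<le> t \<and> t < hi e" using eqs by metis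
  qed
  also have "\<dots> = (\<Sum>e\<in>K. edge_weight (\<lambda>p q. \<bar>g p - g q\<bar>) e)"
  proof (rule sum.cong)
    fix e assume "e \<in> K"
    then obtain p q where "e = {p,q}" using assms(2) by blast
    then show "hi e - lo e = edge_weight (\<lambda>p q. \<bar>g p - g q\<bar>) e" using eqs by simp
  qed simp
  finally show ?thesis by linarith
qed


definition cls :: "'a set set \<Rightarrow> 'a \<Rightarrow> 'a set" where
  "cls K x = {y. reach K x y}"

lemma cls_eq_iff: "cls K x = cls K y \<longleftrightarrow> reach K x y"
proof
  assume "cls K x = cls K y"
  then have "y \<in> cls K x" using reach_refl unfolding cls_def by fastforce
  then show "reach K x y" unfolding cls_def by simp
next
  assume a: "reach K x y"
  have "reach K x z \<longleftrightarrow> reach K y z" for z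
    using a reach_sym[OF a] reach_trans[of K x y z] reach_trans[of K y x z] by blast
  then have "reach K x = reach K y" by (rule ext)
  then show "cls K x = cls K y" unfolding cls_def by simp
qed

lemma image_drop:
  assumes "b \<in> X" "b \<noteq> a" "f a = f b"
  shows "f ` X = f ` (X - {a})"
proof (cases "a \<in> X")
  case True
  then have "X = insert a (X - {a})" by blast
  then have "f ` X = insert (f a) (f ` (X - {a}))" by (metis image_insert)
  moreover have "f a \<in> f ` (X - {a})" using assms by force
  ultimately show ?thesis by (simp add: insert_absorb)
qed simp

lemma step_count:
  assumes "finite U" "u \<in> U" "v \<in> U" "\<not> reach K u v"
  shows "card (cls (insert {u,v} K) ` U) + 1 \<le> card (cls K ` U)"
proof -
  define \<phi> where "\<phi> C = (if u \<in> C \<or> v \<in> C then cls K u \<union> cls K v else C)" for C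
  have key: "cls (insert {u,v} K) x = \<phi> (cls K x)" for x
  proof (cases "reach K x u")
    case True
    have "reach K x y \<or> (reach K x u \<and> reach K v y) \<or> (reach K x v \<and> reach K u y)
      \<longleftrightarrow> reach K u y \<or> reach K v y" for y
      using True reach_sym[OF True] reach_trans[of K x u y] reach_trans[of K u x y] by blast
    then show ?thesis using True unfolding \<phi>_def cls_def reach_insert_iff by auto
  next
    case F1: False
    show ?thesis
    proof (cases "reach K x v")
    case True
    have "reach K x y \<or> (reach K x u \<and> reach K v y) \<or> (reach K x v \<and> reach K u y)
      \<longleftrightarrow> reach K u y \<or> reach K v y" for y
      using True F1 reach_sym[OF True] reach_trans[of K x v y] reach_trans[of K v x y] by blast
    then show ?thesis using True unfolding \<phi>_def cls_def reach_insert_iff by auto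
  next
    case False
    with F1
    show ?thesis unfolding \<phi>_def cls_def reach_insert_iff by auto
  qed
  qed
  have ne: "cls K u \<noteq> cls K v" using assms(4) cls_eq_iff by metis
  have "u \<in> cls K u" "v \<in> cls K v" unfolding cls_def by (simp_all add: reach_refl)
  then have phieq: "\<phi> (cls K u) = \<phi> (cls K v)" unfolding \<phi>_def by simp
  have "cls (insert {u,v} K) ` U = \<phi> ` (cls K ` U)" using key by (auto simp: image_image)
  also have "\<dots> = \<phi> ` (cls K ` U - {cls K v})"
    using phieq ne assms(2,3) by (intro image_drop[where b="cls K u"]) auto
  finally have "card (cls (insert {u,v} K) ` U) \<le> card (cls K ` U - {cls K v})"
    using card_image_le assms(1) by (metis finite_Diff finite_imageI)
  also have "\<dots> = card (cls K ` U) - 1" using assms(1,3) by simp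
  finally show ?thesis using assms(1,3) card_gt_0_iff[of "cls K ` U"] by fastforce
qed

lemma count_lemma:
  assumes "finite H" "finite U" "G \<inter> H = {}"
    and "\<forall>e\<in>H. \<exists>u v. e = {u,v} \<and> u \<in> U \<and> v \<in> U \<and> \<not> reach (G \<union> H - {e}) u v"
  shows "card H + card (cls (G \<union> H) ` U) \<le> card (cls G ` U)"
  using assms(1,3,4)
proof (induction H rule: finite_induct)
  case empty then show ?case by simp
next
  case (insert e H)
  have hypH: "\<forall>e'\<in>H. \<exists>u v. e' = {u,v} \<and> u \<in> U \<and> v \<in> U \<and> \<not> reach (G \<union> H - {e'}) u v"
  proof
    fix e' assume "e' \<in> H"
    then obtain u v where "e' = {u,v}" "u \<in> U" "v \<in> U" "\<not> reach (G \<union> insert e H - {e'}) u v"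
      using insert.prems(2) by blast
    moreover have "G \<union> H - {e'} \<subseteq> G \<union> insert e H - {e'}" by auto
    ultimately show "\<exists>u v. e' = {u,v} \<and> u \<in> U \<and> v \<in> U \<and> \<not> reach (G \<union> H - {e'}) u v"
      using reach_mono by metis
  qed
  have IH: "card H + card (cls (G \<union> H) ` U) \<le> card (cls G ` U)"
    using insert.IH insert.prems(1) hypH by blast
  obtain u v where uv: "e = {u,v}" "u \<in> U" "v \<in> U" "\<not> reach (G \<union> insert e H - {e}) u v"
    using insert.prems(2) by blast
  have eq1: "G \<union> insert e H - {e} = G \<union> H" using insert.hyps(2) insert.prems(1) by auto
  have eq2: "G \<union> insert e H = insert {u,v} (G \<union> H)" using uv(1) by auto
  have "card (cls (G \<union> insert e H) ` U) + 1 \<le> card (cls (G \<union> H) ` U)"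
    unfolding eq2 using step_count[OF assms(2) uv(2,3)] uv(4) eq1 by simp
  then show ?case using IH insert.hyps by simp
qed


lemma forest_mono: "forest F \<Longrightarrow> F' \<subseteq> F \<Longrightarrow> forest F'"
  unfolding forest_def
proof (intro ballI allI impI)
  fix e u v assume f: "\<forall>e\<in>F. \<forall>u v. e = {u, v} \<longrightarrow> \<not> reach (F - {e}) u v"
    and s: "F' \<subseteq> F" and e: "e \<in> F'" "e = {u,v}"
  show "\<not> reach (F' - {e}) u v"
  proof
    assume "reach (F' - {e}) u v"
    then have "reach (F - {e}) u v" by (rule reach_mono[rotated]) (use s in auto)
    then show False using f e s by blast
  qed
qed

lemma cut_edge:
  assumes "finite F" "forest F" "G \<subseteq> F" "reach F x y" "\<not> reach G x y" "\<forall>e\<in>F. \<exists>a b. e = {a,b}"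
  shows "\<exists>e\<in>F - G. \<not> reach (F - {e}) x y"
  using assms
proof (induction "card (F - G)" arbitrary: F rule: less_induct)
  case less
  have "F - G \<noteq> {}"
  proof
    assume "F - G = {}"
    then have "F = G" using less.prems(3) by blast
    then show False using less.prems(4,5) by simp
  qed
  then obtain e where e: "e \<in> F - G" by blast
  show ?case
  proof (cases "reach (F - {e}) x y")
    case False then show ?thesis using e by blast
  next
    case True
    have "\<exists>e'\<in>(F - {e}) - G. \<not> reach (F - {e} - {e'}) x y"
    proof (rule less.hyps)
      show "card (F - {e} - G) < card (F - G)"
        using e less.prems(1) by (metis Diff_insert2 card_Diff1_less finite_Diff insert_Diff_single Diff_insert)
      show "finite (F - {e})" using less.prems(1) by simp
      show "forest (F - {e})" using less.prems(2) by (rule forest_mono) auto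
      show "G \<subseteq> F - {e}" using less.prems(3) e by auto
    qed (use True less.prems in auto)
    then obtain e' where e': "e' \<in> F - {e} - G" "\<not> reach (F - {e} - {e'}) x y" by blast
    obtain a b where ab: "e = {a,b}" using less.prems(6) e by blast
    have "\<not> reach (F - {e'}) x y"
    proof
      assume r: "reach (F - {e'}) x y"
      have "F - {e'} = insert {a,b} (F - {e} - {e'})" using ab e e' by auto
      then have "reach (F - {e} - {e'}) x a \<and> reach (F - {e} - {e'}) b y \<or>
                 reach (F - {e} - {e'}) x b \<and> reach (F - {e} - {e'}) a y"
        using r e'(2) reach_insert_cases by metis
      then have "reach (F - {e}) x a \<and> reach (F - {e}) b y \<or> reach (F - {e}) x b \<and> reach (F - {e}) a y"
        using reach_mono[of "F - {e} - {e'}" "F - {e}"] by blast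
      then have "reach (F - {e}) a b" using True reach_sym reach_trans by metis
      then show False using less.prems(2) e ab unfolding forest_def by blast
    qed
    then show ?thesis using e' by blast
  qed
qed

lemma metric_sym: "metric_on V d \<Longrightarrow> x \<in> V \<Longrightarrow> y \<in> V \<Longrightarrow> d x y = d y x"
  unfolding metric_on_def by blast
lemma metric_nonneg: "metric_on V d \<Longrightarrow> x \<in> V \<Longrightarrow> y \<in> V \<Longrightarrow> 0 \<le> d x y"
  unfolding metric_on_def by blast
lemma metric_zero: "metric_on V d \<Longrightarrow> x \<in> V \<Longrightarrow> d x x = 0"
  unfolding metric_on_def by blast
lemma metric_pos: "metric_on V d \<Longrightarrow> x \<in> V \<Longrightarrow> y \<in> V \<Longrightarrow> x \<noteq> y \<Longrightarrow> 0 < d x y"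
  unfolding metric_on_def by (metis order_le_less)
lemma metric_tri: "metric_on V d \<Longrightarrow> x \<in> V \<Longrightarrow> y \<in> V \<Longrightarrow> z \<in> V \<Longrightarrow> d x z \<le> d x y + d y z"
  unfolding metric_on_def by blast

lemma SDG_finite: "finite V \<Longrightarrow> finite (SDG V d r)"
proof -
  assume "finite V"
  have "SDG V d r \<subseteq> Pow V" unfolding SDG_def by auto
  then show ?thesis using \<open>finite V\<close> finite_subset by blast
qed

lemma SDG_elem: "e \<in> SDG V d r \<Longrightarrow> \<exists>u v. e = {u,v} \<and> u \<in> V \<and> v \<in> V \<and> u \<noteq> v \<and> d u v \<le> r u \<and> d u v \<le> r v"
  unfolding SDG_def by blast

lemma light_reach:
  assumes fin: "finite V" and met: "metric_on V d"
    and msf: "is_MSF V d (SDG V d r) F"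
    and xy: "x \<in> V" "y \<in> V" "x \<noteq> y" "d x y \<le> r x" "d x y \<le> r y" "d x y < L"
  shows "reach {e\<in>F. edge_weight d e < L} x y"
proof (rule ccontr)
  define G where "G = {e\<in>F. edge_weight d e < L}"
  assume nr: "\<not> reach {e\<in>F. edge_weight d e < L} x y"
  then have nrG: "\<not> reach G x y" unfolding G_def .
  have sf: "spanning_forest V (SDG V d r) F" using msf unfolding is_MSF_def by blast
  have FS: "F \<subseteq> SDG V d r" and forF: "forest F"
    and spanF: "\<forall>u\<in>V. \<forall>v\<in>V. reach F u v \<longleftrightarrow> reach (SDG V d r) u v"
    using sf unfolding spanning_forest_def by blast+
  have finF: "finite F" using FS SDG_finite[OF fin] finite_subset by blast
  have gS: "{x,y} \<in> SDG V d r" unfolding SDG_def using xy by blast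
  have rF: "reach F x y" using spanF xy reach_edge[OF gS] by blast
  have Fpairs: "\<forall>e\<in>F. \<exists>a b. e = {a,b}" using FS SDG_elem by blast
  obtain e where e: "e \<in> F - G" "\<not> reach (F - {e}) x y"
    using cut_edge[OF finF forF _ rF nrG Fpairs] unfolding G_def by blast
  obtain a b where ab: "e = {a,b}" "a \<in> V" "b \<in> V" "a \<noteq> b"
    using FS e SDG_elem by blast
  have we: "L \<le> edge_weight d e" using e unfolding G_def by auto
  have wg: "edge_weight d {x,y} = d x y" using metric_sym[OF met xy(1,2)] by (rule edge_weight_eq)
  have gF: "{x,y} \<notin> F"
  proof
    assume "{x,y} \<in> F"
    then have "{x,y} \<in> G" unfolding G_def using wg xy by simp
    then show False using nrG reach_edge by metis
  qed
  define F' where "F' = insert {x,y} (F - {e})"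
  have eF: "F = insert {a,b} (F - {e})" using e ab by blast
  have reachF': "reach F' a b"
  proof -
    have "reach (F - {e}) x a \<and> reach (F - {e}) b y \<or> reach (F - {e}) x b \<and> reach (F - {e}) a y"
      using rF eF e(2) reach_insert_cases by metis
    moreover have "\<And>p q. reach (F - {e}) p q \<Longrightarrow> reach F' p q"
      by (rule reach_mono) (auto simp: F'_def)
    moreover have "reach F' x y" "reach F' y x" using reach_edge reach_sym unfolding F'_def by (metis insertI1)+
    ultimately show ?thesis using reach_sym reach_trans by metis
  qed
  have same: "reach F' p q \<longleftrightarrow> reach F p q" for p q
  proof
    assume "reach F' p q"
    then show "reach F p q"
    proof (rule reach_sub[rotated])
      fix s t assume "{s,t} \<in> F'"
      then have "{s,t} = {x,y} \<or> {s,t} \<in> F" unfolding F'_def by auto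
      then show "reach F s t"
        using rF reach_sym reach_edge by (metis doubleton_eq_iff)
    qed
  next
    assume "reach F p q"
    then show "reach F' p q"
    proof (rule reach_sub[rotated])
      fix s t assume st: "{s,t} \<in> F"
      show "reach F' s t"
      proof (cases "{s,t} = e")
        case True
        then have "(s = a \<and> t = b) \<or> (s = b \<and> t = a)" using ab by (auto simp: doubleton_eq_iff)
        then show ?thesis using reachF' reach_sym by metis
      next
        case False
        then have "{s,t} \<in> F'" using st unfolding F'_def by auto
        then show ?thesis by (rule reach_edge)
      qed
    qed
  qed
  have forF': "forest F'"
    unfolding forest_def
  proof (intro ballI allI impI)
    fix e2 p q assume e2: "e2 \<in> F'" "e2 = {p,q}"
    show "\<not> reach (F' - {e2}) p q"
    proof (cases "e2 = {x,y}")
      case True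
      then have "F' - {e2} = F - {e}" unfolding F'_def using gF e by auto
      moreover have "(p = x \<and> q = y) \<or> (p = y \<and> q = x)" using True e2(2) by (auto simp: doubleton_eq_iff)
      ultimately show ?thesis using e(2) reach_sym by metis
    next
      case False
      then have e2F: "e2 \<in> F - {e}" using e2 unfolding F'_def by auto
      define K where "K = F - {e} - {e2}"
      have eq: "F' - {e2} = insert {x,y} K" unfolding F'_def K_def using False by auto
      show ?thesis
      proof
        assume "reach (F' - {e2}) p q"
        then have c: "reach K p q \<or> (reach K p x \<and> reach K y q) \<or> (reach K p y \<and> reach K x q)"
          unfolding eq by (rule reach_insert_cases)
        have mK: "\<And>s t. reach K s t \<Longrightarrow> reach (F - {e}) s t" by (rule reach_mono) (auto simp: K_def)
        have mK2: "\<And>s t. reach K s t \<Longrightarrow> reach (F - {e2}) s t" by (rule reach_mono) (auto simp: K_def)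
        have pq: "reach (F - {e}) p q" using e2F e2(2) reach_edge by metis
        show False
        proof -
          { assume "reach K p q"
            then have "reach (F - {e2}) p q" by (rule mK2)
            then have False using forF e2F e2(2) unfolding forest_def by blast }
          moreover
          { assume "reach K p x \<and> reach K y q"
            then have "reach (F - {e}) x y" using mK pq reach_sym reach_trans by metis
            then have False using e(2) by simp }
          moreover
          { assume "reach K p y \<and> reach K x q"
            then have "reach (F - {e}) x y" using mK pq reach_sym reach_trans by metis
            then have False using e(2) by simp }
          ultimately show False using c by blast
        qed
      qed
    qed
  qed
  have sf': "spanning_forest V (SDG V d r) F'"
    unfolding spanning_forest_def
  proof (intro conjI)
    show "F' \<subseteq> SDG V d r" unfolding F'_def using FS gS by auto
    show "forest F'" by (rule forF')
    show "\<forall>u\<in>V. \<forall>v\<in>V. reach F' u v = reach (SDG V d r) u v" using same spanF by simp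
  qed
  have "graph_weight d F \<le> graph_weight d F'" using msf sf' unfolding is_MSF_def by blast
  moreover have "graph_weight d F = edge_weight d e + (\<Sum>e\<in>F - {e}. edge_weight d e)"
    unfolding graph_weight_def using finF e(1) by (simp add: sum.remove)
  moreover have "graph_weight d F' = edge_weight d {x,y} + (\<Sum>e\<in>F - {e}. edge_weight d e)"
    unfolding graph_weight_def F'_def using finF gF by (simp add: sum.insert)
  ultimately show False using we wg xy(6) by linarith
qed


lemma tree_bound:
  assumes met: "metric_on V d" and finT: "finite T"
    and Tp: "\<forall>e\<in>T. \<exists>p q. e = {p,q} \<and> p \<in> V \<and> q \<in> V"
    and SV: "S \<subseteq> V" and finS: "finite S"
    and sep: "\<forall>x\<in>S. \<forall>y\<in>S. x \<noteq> y \<longrightarrow> L \<le> d x y" and Lpos: "L > 0"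
    and conn: "\<forall>x\<in>V. \<forall>y\<in>V. reach T x y" and cS: "card S \<ge> 2"
  shows "real (card S) * L / 2 \<le> graph_weight d T"
proof -
  define f where "f s x = max 0 (L/2 - d s x)" for s x
  define var where "var s = edge_weight (\<lambda>p q. \<bar>f s p - f s q\<bar>)" for s
  have var_eq: "var s {p,q} = \<bar>f s p - f s q\<bar>" for s p q
    unfolding var_def by (rule edge_weight_eq) (simp add: abs_minus_commute)
  have f0: "0 \<le> f s x" for s x unfolding f_def by simp
  have per_s: "L/2 \<le> (\<Sum>e\<in>T. var s e)" if s: "s \<in> S" for s
  proof -
    have "S - {s} \<noteq> {}"
    proof
      assume "S - {s} = {}"
      then have "S \<subseteq> {s}" by blast
      then have "card S \<le> card {s}" by (intro card_mono) auto
      then have "card S \<le> 1" by simp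
      then show False using cS by simp
    qed
    then obtain s' where s': "s' \<in> S" "s' \<noteq> s" by blast
    have "reach T s s'" using conn SV s s' by blast
    moreover have "\<forall>e\<in>T. \<exists>p q. e = {p,q}" using Tp by blast
    ultimately have "\<bar>f s s - f s s'\<bar> \<le> (\<Sum>e\<in>T. var s e)"
      unfolding var_def using variation[OF finT] by blast
    moreover have "f s s = L/2" unfolding f_def using metric_zero[OF met] SV s Lpos by auto
    moreover have "f s s' = 0" unfolding f_def using sep s s' Lpos by force
    ultimately show ?thesis by simp
  qed
  have lip: "\<bar>f s p - f s q\<bar> \<le> d p q" if "s \<in> S" "p \<in> V" "q \<in> V" for s p q
  proof -
    have sV: "s \<in> V" using that SV by blast
    have "d s p \<le> d s q + d q p" "d s q \<le> d s p + d p q" "d q p = d p q"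
      using metric_tri[OF met] metric_sym[OF met] sV that(2,3) by blast+
    then have "\<bar>d s p - d s q\<bar> \<le> d p q" by linarith
    then show ?thesis unfolding f_def by (auto simp: max_def abs_le_iff)
  qed
  have disj: "s = s'" if "x \<in> V" "s \<in> S" "s' \<in> S" "0 < f s x" "0 < f s' x" for x s s'
  proof (rule ccontr)
    assume ne: "s \<noteq> s'"
    have sV: "s \<in> V" "s' \<in> V" using that SV by blast+
    have "d s x < L/2" "d s' x < L/2" using that(4,5) unfolding f_def by (auto simp: max_def split: if_splits)
    moreover have "d s s' \<le> d s x + d x s'" "d x s' = d s' x"
      using metric_tri[OF met] metric_sym[OF met] sV that(1) by blast+
    moreover have "L \<le> d s s'" using sep that ne by blast
    ultimately show False by linarith
  qed
  have per_e: "(\<Sum>s\<in>S. \<bar>f s p - f s q\<bar>) \<le> d p q" if pq: "p \<in> V" "q \<in> V" for p q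
  proof (cases "\<exists>sp\<in>S. \<exists>sq\<in>S. 0 < f sp p \<and> 0 < f sq q \<and> sp \<noteq> sq")
    case True
    then obtain sp sq where s: "sp \<in> S" "sq \<in> S" "0 < f sp p" "0 < f sq q" "sp \<noteq> sq" by blast
    have z1: "f sp q = 0" using disj[OF pq(2) s(1) s(2) _ s(4)] s(5) f0[of sp q] by force
    have z2: "f sq p = 0" using disj[OF pq(1) s(1) s(2) s(3)] s(5) f0[of sq p] by force
    have "(\<Sum>s\<in>S. \<bar>f s p - f s q\<bar>) = (\<Sum>s\<in>{sp,sq}. \<bar>f s p - f s q\<bar>)"
    proof (rule sum.mono_neutral_right)
      show "finite S" by fact
      show "{sp, sq} \<subseteq> S" using s by blast
      show "\<forall>i\<in>S - {sp, sq}. \<bar>f i p - f i q\<bar> = 0"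
      proof
        fix i assume i: "i \<in> S - {sp,sq}"
        have "f i p = 0" using disj[OF pq(1) _ s(1) _ s(3), of i] i f0[of i p] by force
        moreover have "f i q = 0" using disj[OF pq(2) _ s(2) _ s(4), of i] i f0[of i q] by force
        ultimately show "\<bar>f i p - f i q\<bar> = 0" by simp
      qed
    qed
    also have "\<dots> = f sp p + f sq q" using s(5) z1 z2 f0 by simp
    also have "\<dots> = L - d sp p - d sq q" using s(3,4) unfolding f_def by (auto simp: max_def split: if_splits)
    also have "\<dots> \<le> d p q"
    proof -
      have sV: "sp \<in> V" "sq \<in> V" using s SV by blast+
      have "d sp sq \<le> d sp p + d p sq" "d p sq \<le> d p q + d q sq" "d q sq = d sq q"
        using metric_tri[OF met] metric_sym[OF met] sV pq by blast+
      moreover have "L \<le> d sp sq" using sep s by blast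
      ultimately show ?thesis by linarith
    qed
    finally show ?thesis .
  next
    case False
    obtain s0 where s0: "\<forall>s\<in>S. s \<noteq> s0 \<longrightarrow> f s p = 0 \<and> f s q = 0"
    proof (cases "\<exists>sp\<in>S. 0 < f sp p")
      case True
      then obtain sp where sp: "sp \<in> S" "0 < f sp p" by blast
      have "\<forall>s\<in>S. s \<noteq> sp \<longrightarrow> f s p = 0 \<and> f s q = 0"
      proof (intro ballI impI)
        fix s assume "s \<in> S" "s \<noteq> sp"
        then show "f s p = 0 \<and> f s q = 0"
          using disj[OF pq(1) _ sp(1) _ sp(2), of s] False sp f0[of s p] f0[of s q] by force
      qed
      then show ?thesis using that by blast
    next
      case F2: False
      show ?thesis
      proof (cases "\<exists>sq\<in>S. 0 < f sq q")
        case True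
        then obtain sq where sq: "sq \<in> S" "0 < f sq q" by blast
        have "\<forall>s\<in>S. s \<noteq> sq \<longrightarrow> f s p = 0 \<and> f s q = 0"
        proof (intro ballI impI)
          fix s assume "s \<in> S" "s \<noteq> sq"
          then show "f s p = 0 \<and> f s q = 0"
            using disj[OF pq(2) _ sq(1) _ sq(2), of s] F2 f0[of s p] f0[of s q] by force
        qed
        then show ?thesis using that by blast
      next
        case False
        then have "\<forall>s\<in>S. s \<noteq> p \<longrightarrow> f s p = 0 \<and> f s q = 0" using F2 f0 by (meson not_less order_antisym)
        then show ?thesis using that by blast
      qed
    qed
    have "(\<Sum>s\<in>S. \<bar>f s p - f s q\<bar>) = (\<Sum>s\<in>S \<inter> {s0}. \<bar>f s p - f s q\<bar>)"
      by (rule sum.mono_neutral_right) (use finS s0 in auto)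
    also have "\<dots> \<le> d p q"
    proof (cases "s0 \<in> S")
      case True
      then have "S \<inter> {s0} = {s0}" by blast
      then show ?thesis using lip[OF True pq] by simp
    next
      case False
      then have "S \<inter> {s0} = {}" by blast
      then show ?thesis using metric_nonneg[OF met pq] by simp
    qed
    finally show ?thesis .
  qed
  have "real (card S) * L / 2 = (\<Sum>s\<in>S. L/2)" by simp
  also have "\<dots> \<le> (\<Sum>s\<in>S. \<Sum>e\<in>T. var s e)" by (rule sum_mono) (rule per_s)
  also have "\<dots> = (\<Sum>e\<in>T. \<Sum>s\<in>S. var s e)" by (rule sum.swap)
  also have "\<dots> \<le> (\<Sum>e\<in>T. edge_weight d e)"
  proof (rule sum_mono)
    fix e assume "e \<in> T"
    then obtain p q where e: "e = {p,q}" "p \<in> V" "q \<in> V" using Tp by blast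
    have "(\<Sum>s\<in>S. var s e) = (\<Sum>s\<in>S. \<bar>f s p - f s q\<bar>)" using e var_eq by simp
    also have "\<dots> \<le> d p q" by (rule per_e) (use e in auto)
    also have "\<dots> = edge_weight d e" using e edge_weight_eq[of d p q] metric_sym[OF met] by simp
    finally show "(\<Sum>s\<in>S. var s e) \<le> edge_weight d e" .
  qed
  finally show ?thesis unfolding graph_weight_def .
qed

lemma rank_sum:
  fixes w :: "'e \<Rightarrow> real"
  assumes "finite X"
  shows "(\<Sum>x\<in>X. 1 / (real (card {y\<in>X. w x \<le> w y}) + 1)) \<le> ln (real (card X) + 1)"
  using assms
proof (induction "card X" arbitrary: X rule: less_induct)
  case less
  show ?case
  proof (cases "X = {}")
    case True then show ?thesis by simp
  next
    case False
    have "Min (w ` X) \<in> w ` X" using False less.prems by simp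
    then obtain m where m: "m \<in> X" "w m = Min (w ` X)" by auto
    have mmin: "w m \<le> w y" if "y \<in> X" for y using m that less.prems by simp
    define X' where "X' = X - {m}"
    define k where "k = card X"
    have k1: "k \<ge> 1" using False less.prems unfolding k_def by (simp add: Suc_leI card_gt_0_iff)
    have cX': "card X' = k - 1" unfolding X'_def k_def using m less.prems by simp
    have finX': "finite X'" unfolding X'_def using less.prems by simp
    have cm: "card {y\<in>X. w m \<le> w y} = k" unfolding k_def using mmin
      by (metis (mono_tags, lifting) Collect_cong Collect_mem_eq)
    have "(\<Sum>x\<in>X. 1 / (real (card {y\<in>X. w x \<le> w y}) + 1))
        = 1 / (real k + 1) + (\<Sum>x\<in>X'. 1 / (real (card {y\<in>X. w x \<le> w y}) + 1))"
      unfolding X'_def using less.prems m cm by (simp add: sum.remove)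
    also have "(\<Sum>x\<in>X'. 1 / (real (card {y\<in>X. w x \<le> w y}) + 1))
        \<le> (\<Sum>x\<in>X'. 1 / (real (card {y\<in>X'. w x \<le> w y}) + 1))"
    proof (rule sum_mono)
      fix x assume "x \<in> X'"
      have "card {y\<in>X'. w x \<le> w y} \<le> card {y\<in>X. w x \<le> w y}"
        by (rule card_mono) (use less.prems in \<open>auto simp: X'_def\<close>)
      then show "1 / (real (card {y\<in>X. w x \<le> w y}) + 1) \<le> 1 / (real (card {y\<in>X'. w x \<le> w y}) + 1)"
        by (intro divide_left_mono) auto
    qed
    also have "(\<Sum>x\<in>X'. 1 / (real (card {y\<in>X'. w x \<le> w y}) + 1)) \<le> ln (real (card X') + 1)"
      by (rule less.hyps) (use cX' k1 finX' in \<open>auto simp: k_def\<close>)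
    also have "real (card X') + 1 = real k" using cX' k1 by simp
    finally have A: "(\<Sum>x\<in>X. 1 / (real (card {y\<in>X. w x \<le> w y}) + 1)) \<le> 1 / (real k + 1) + ln (real k)"
      by simp
    have "ln (real k / (real k + 1)) \<le> real k / (real k + 1) - 1"
      by (rule ln_le_minus_one) (use k1 in simp)
    moreover have "ln (real k / (real k + 1)) = ln (real k) - ln (real k + 1)"
      by (rule ln_divide_pos) (use k1 in auto)
    moreover have "real k / (real k + 1) - 1 = - 1 / (real k + 1)"
      by (simp add: field_simps)
    ultimately have "1 / (real k + 1) + ln (real k) \<le> ln (real k + 1)" by simp
    then show ?thesis using A unfolding k_def by linarith
  qed
qed


theorem theorem1:
  fixes V :: "'a set" and d :: "'a \<Rightarrow> 'a \<Rightarrow> real" and r :: "'a \<Rightarrow> real"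
    and F T :: "'a set set" and n :: nat
  assumes "finite V" and "card V = n"
    and "metric_on V d"
    and "\<forall>u\<in>V. r u > 0"
    and "is_MSF V d (SDG V d r) F"
    and "is_MST V d T"
  shows "graph_weight d F \<le> 2 * log (5/4) (real n) * graph_weight d T"
proof -
  note fin = assms(1) and met = assms(3) and msf = assms(5)
  have sf: "spanning_forest V (SDG V d r) F" using msf unfolding is_MSF_def by blast
  have FS: "F \<subseteq> SDG V d r" and forF: "forest F"
    using sf unfolding spanning_forest_def by blast+
  have finF: "finite F" using FS SDG_finite[OF fin] finite_subset by blast
  have Fe: "\<exists>u v. e = {u,v} \<and> u \<in> V \<and> v \<in> V \<and> u \<noteq> v \<and> d u v \<le> r u \<and> d u v \<le> r v" if "e \<in> F" for e
    using FS that SDG_elem by blast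
  have Tsf: "spanning_forest V (complete_edges V) T" using assms(6) unfolding is_MST_def is_MSF_def by blast
  have TC: "T \<subseteq> complete_edges V" and spanT: "\<forall>u\<in>V. \<forall>v\<in>V. reach T u v \<longleftrightarrow> reach (complete_edges V) u v"
    using Tsf unfolding spanning_forest_def by blast+
  have "complete_edges V \<subseteq> Pow V" unfolding complete_edges_def by auto
  then have finT: "finite T" using TC fin finite_subset by (metis finite_Pow_iff)
  have Tp: "\<forall>e\<in>T. \<exists>p q. e = {p,q} \<and> p \<in> V \<and> q \<in> V" using TC unfolding complete_edges_def by blast
  have conn: "\<forall>x\<in>V. \<forall>y\<in>V. reach T x y"
  proof (intro ballI)
    fix x y assume xy: "x \<in> V" "y \<in> V"
    have "reach (complete_edges V) x y"
    proof (cases "x = y")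
      case True then show ?thesis by (simp add: reach_refl)
    next
      case False
      then have "{x,y} \<in> complete_edges V" unfolding complete_edges_def using xy by blast
      then show ?thesis by (rule reach_edge)
    qed
    then show "reach T x y" using spanT xy by blast
  qed
  define W where "W = graph_weight d T"
  have W0: "0 \<le> W" unfolding W_def graph_weight_def
  proof (rule sum_nonneg)
    fix e assume "e \<in> T"
    then obtain p q where "e = {p,q}" "p \<in> V" "q \<in> V" using Tp by blast
    then show "0 \<le> edge_weight d e" using edge_weight_eq[of d p q] metric_sym[OF met] metric_nonneg[OF met] by simp
  qed
  have ewF: "edge_weight d e = d u v" if "e = {u,v}" "u \<in> V" "v \<in> V" for e u v
    using that edge_weight_eq[of d u v] metric_sym[OF met] by simp
  have key: "(real (card {e'\<in>F. edge_weight d e \<le> edge_weight d e'}) + 1) * edge_weight d e \<le> 2 * W"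
    if eF: "e \<in> F" for e
  proof -
    obtain u v where uv: "e = {u,v}" "u \<in> V" "v \<in> V" "u \<noteq> v" "d u v \<le> r u" "d u v \<le> r v"
      using Fe[OF eF] by blast
    define L where "L = edge_weight d e"
    have Le: "L = d u v" unfolding L_def using ewF uv by blast
    have Lpos: "0 < L" using Le metric_pos[OF met uv(2,3,4)] by simp
    define G where "G = {e'\<in>F. edge_weight d e' < L}"
    define H where "H = {e'\<in>F. L \<le> edge_weight d e'}"
    define U where "U = {x\<in>V. L \<le> r x}"
    have GH: "G \<union> H = F" "G \<inter> H = {}" unfolding G_def H_def by auto
    have finH: "finite H" unfolding H_def using finF by simp
    have finU: "finite U" unfolding U_def using fin by simp
    have "card H + card (cls (G \<union> H) ` U) \<le> card (cls G ` U)"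
    proof (rule count_lemma[OF finH finU GH(2)])
      show "\<forall>e\<in>H. \<exists>u v. e = {u, v} \<and> u \<in> U \<and> v \<in> U \<and> \<not> reach (G \<union> H - {e}) u v"
      proof
        fix e' assume e'H: "e' \<in> H"
        then have e'F: "e' \<in> F" unfolding H_def by simp
        obtain a b where ab: "e' = {a,b}" "a \<in> V" "b \<in> V" "a \<noteq> b" "d a b \<le> r a" "d a b \<le> r b"
          using Fe[OF e'F] by blast
        have "L \<le> d a b" using e'H ab ewF unfolding H_def by auto
        then have "a \<in> U" "b \<in> U" unfolding U_def using ab by auto
        moreover have "\<not> reach (G \<union> H - {e'}) a b" using forF e'F ab(1) GH(1) unfolding forest_def by blast
        ultimately show "\<exists>u v. e' = {u, v} \<and> u \<in> U \<and> v \<in> U \<and> \<not> reach (G \<union> H - {e'}) u v"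
          using ab(1) by blast
      qed
    qed
    then have cnt: "card H + card (cls F ` U) \<le> card (cls G ` U)" using GH(1) by simp
    have uU: "u \<in> U" unfolding U_def using uv Le by simp
    have "card (cls F ` U) \<ge> 1" using uU finU by (metis One_nat_def Suc_leI card_gt_0_iff empty_iff finite_imageI imageI)
    then have cnt2: "card H + 1 \<le> card (cls G ` U)" using cnt by linarith
    define S where "S = inv_into U (cls G) ` (cls G ` U)"
    have SU: "S \<subseteq> U" unfolding S_def by (auto intro: inv_into_into)
    have cardS: "card S = card (cls G ` U)" unfolding S_def
      by (rule card_image) (rule inj_on_inv_into, simp)
    have finS: "finite S" using SU finU finite_subset by blast
    have SV: "S \<subseteq> V" using SU unfolding U_def by auto
    have sep: "\<forall>x\<in>S. \<forall>y\<in>S. x \<noteq> y \<longrightarrow> L \<le> d x y"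
    proof (intro ballI impI)
      fix x y assume x: "x \<in> S" and y: "y \<in> S" and ne: "x \<noteq> y"
      obtain x0 where x0: "x0 \<in> U" "x = inv_into U (cls G) (cls G x0)" using x unfolding S_def by auto
      obtain y0 where y0: "y0 \<in> U" "y = inv_into U (cls G) (cls G y0)" using y unfolding S_def by auto
      have "cls G x = cls G x0" "cls G y = cls G y0" using x0 y0 f_inv_into_f by (metis imageI)+
      then have "cls G x \<noteq> cls G y" using ne x0 y0 by metis
      then have nr: "\<not> reach G x y" using cls_eq_iff by metis
      show "L \<le> d x y"
      proof (rule ccontr)
        assume "\<not> L \<le> d x y"
        then have lt: "d x y < L" by simp
        have xyU: "x \<in> U" "y \<in> U" using x y SU by auto
        have "reach {e\<in>F. edge_weight d e < L} x y"
          by (rule light_reach[OF fin met msf]) (use xyU lt ne in \<open>auto simp: U_def\<close>)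
        then show False using nr unfolding G_def by simp
      qed
    qed
    have "1 \<le> card H" using eF finH unfolding H_def L_def by (metis (mono_tags, lifting) One_nat_def Suc_leI card_gt_0_iff empty_iff mem_Collect_eq order_refl)
    then have c2: "2 \<le> card S" using cnt2 cardS by linarith
    have "real (card S) * L / 2 \<le> W"
      unfolding W_def by (rule tree_bound[OF met finT Tp SV finS sep Lpos conn c2])
    moreover have "real (card H) + 1 \<le> real (card S)" using cnt2 cardS by linarith
    moreover have "(real (card H) + 1) * L \<le> real (card S) * L"
      using \<open>real (card H) + 1 \<le> real (card S)\<close> Lpos by (intro mult_right_mono) auto
    ultimately have "(real (card H) + 1) * L \<le> 2 * W" by linarith
    then show ?thesis unfolding H_def L_def .
  qed
  have logpos: "ln (real n) \<le> log (5/4) (real n)" "0 \<le> log (5/4) (real n)"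
  proof -
    have c1: "ln (5/4::real) \<le> 5/4 - 1" by (rule ln_le_minus_one) simp
    have c0: "0 < ln (5/4::real)" by simp
    have ln0: "0 \<le> ln (real n)" by (cases "n = 0") auto
    have "ln (real n) * 1 \<le> ln (real n) * (1 / ln (5/4))"
      by (rule mult_left_mono) (use c1 c0 ln0 in \<open>auto simp: field_simps\<close>)
    then show "ln (real n) \<le> log (5/4) (real n)" unfolding log_def by simp
    show "0 \<le> log (5/4) (real n)" unfolding log_def using ln0 c0 by simp
  qed
  show ?thesis
  proof (cases "F = {}")
    case True
    then show ?thesis using W0 logpos unfolding W_def graph_weight_def by simp
  next
    case False
    then obtain e0 where e0: "e0 \<in> F" by blast
    have Vne: "V \<noteq> {}" using Fe[OF e0] by blast
    have "card F + card (cls ({} \<union> F) ` V) \<le> card (cls {} ` V)"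
    proof (rule count_lemma[OF finF fin])
      show "{} \<inter> F = {}" by simp
      show "\<forall>e\<in>F. \<exists>u v. e = {u, v} \<and> u \<in> V \<and> v \<in> V \<and> \<not> reach ({} \<union> F - {e}) u v"
        using Fe forF unfolding forest_def by fastforce
    qed
    moreover have "card (cls {} ` V) \<le> n" using card_image_le[OF fin] assms(2) by metis
    moreover have "card (cls ({} \<union> F) ` V) \<ge> 1" using Vne fin
      by (metis One_nat_def Suc_leI card_gt_0_iff finite_imageI image_is_empty)
    ultimately have cF: "real (card F) + 1 \<le> real n" by linarith
    have "graph_weight d F = (\<Sum>e\<in>F. edge_weight d e)" unfolding graph_weight_def ..
    also have "\<dots> \<le> (\<Sum>e\<in>F. 2 * W * (1 / (real (card {e'\<in>F. edge_weight d e \<le> edge_weight d e'}) + 1)))"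
    proof (rule sum_mono)
      fix e assume "e \<in> F"
      from key[OF this] show "edge_weight d e \<le> 2 * W * (1 / (real (card {e'\<in>F. edge_weight d e \<le> edge_weight d e'}) + 1))"
        by (simp add: field_simps)
    qed
    also have "\<dots> = 2 * W * (\<Sum>e\<in>F. 1 / (real (card {e'\<in>F. edge_weight d e \<le> edge_weight d e'}) + 1))"
      by (simp add: sum_distrib_left)
    also have "\<dots> \<le> 2 * W * ln (real (card F) + 1)"
      by (rule mult_left_mono) (use rank_sum[OF finF] W0 in auto)
    also have "\<dots> \<le> 2 * W * ln (real n)"
      by (rule mult_left_mono) (use cF W0 in auto)
    also have "\<dots> \<le> 2 * W * log (5/4) (real n)"
      by (rule mult_left_mono) (use logpos W0 in auto)
    finally show ?thesis unfolding W_def by (simp add: algebra_simps)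
  qed
qed

end
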